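(* Let $\hat\theta$ be the maximum likelihood estimate of an ordered real sample $x_1 < x_2 < \dots < x_n$ from the Cauchy distribution, and let $F(x;\theta) = \int_{-\infty}^x f(y;\theta)\,dy$ be the Cauchy distribution function. Then: (i) if $n = 3$, $F(x_3;\hat\theta) + F(x_1;\hat\theta) = 2F(x_2;\hat\theta)$; (ii) if $n = 4$, $F(x_3;\hat\theta) - F(x_1;\hat\theta) = F(x_4;\hat\theta) - F(x_2;\hat\theta) = 1/2$.
   Context: $\mathbb{H} = \{\theta\in\mathbb{C}:\Im\theta>0\}$. For $\theta = \mu+i\sigma\in\mathbb{H}$, $f(x;\theta) = \frac{\sigma}{\pi}\frac{1}{(x-\mu)^2+\sigma^2}$ is the Cauchy density. The maximum likelihood estimate $\hat\theta$ is the unique maximizer over $\mathbb{H}$ of $\prod_{j=1}^n f(x_j;\theta)$. *)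

theory Defs
  imports "HOL-Analysis.Analysis"
begin

definition upper_half :: "complex set" where
  "upper_half = {\<theta>. Im \<theta> > 0}"

definition cauchy_density :: "real \<Rightarrow> complex \<Rightarrow> real" where
  "cauchy_density x \<theta> = Im \<theta> / pi * (1 / ((x - Re \<theta>)^2 + (Im \<theta>)^2))"

definition cauchy_cdf :: "real \<Rightarrow> complex \<Rightarrow> real" where
  "cauchy_cdf x \<theta> = integral {..x} (\<lambda>y. cauchy_density y \<theta>)"

definition cauchy_likelihood :: "nat \<Rightarrow> (nat \<Rightarrow> real) \<Rightarrow> complex \<Rightarrow> real" where
  "cauchy_likelihood n x \<theta> = (\<Prod>j = 1..n. cauchy_density (x j) \<theta>)"

definition is_cauchy_mle :: "nat \<Rightarrow> (nat \<Rightarrow> real) \<Rightarrow> complex \<Rightarrow> bool" where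
  "is_cauchy_mle n x \<theta> \<longleftrightarrow> \<theta> \<in> upper_half \<and>
     (\<forall>\<theta>'\<in>upper_half. cauchy_likelihood n x \<theta>' \<le> cauchy_likelihood n x \<theta>) \<and>
     (\<forall>\<theta>'\<in>upper_half. cauchy_likelihood n x \<theta>' = cauchy_likelihood n x \<theta> \<longrightarrow> \<theta>' = \<theta>)"

end

theory Submission
  imports Defs
begin


lemma cdf_formula:
  assumes s: "Im \<theta> > 0"
  shows "cauchy_cdf x \<theta> = 1/2 + arctan ((x - Re \<theta>) / Im \<theta>) / pi"
proof -
  define m where "m = Re \<theta>"
  define s where "s = Im \<theta>"
  have sp: "s > 0" using assms s_def by simp
  define F where "F = (\<lambda>y. arctan ((y - m) / s) / pi)"
  define f where "f = (\<lambda>y. cauchy_density y \<theta>)"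
  have fe: "f y = s / pi * (1 / ((y - m)^2 + s^2))" for y
    by (simp add: f_def cauchy_density_def m_def s_def)
  have D: "DERIV F y :> f y" for y
  proof -
    have "DERIV F y :> 1 / (1 + ((y - m) / s)^2) * (1 / s) / pi"
      unfolding F_def using sp by (auto intro!: derivative_eq_intros simp: divide_inverse)
    moreover have "1 / (1 + ((y - m) / s)^2) * (1 / s) / pi = f y"
      using sp by (simp add: fe field_simps power2_eq_square)
    ultimately show ?thesis by simp
  qed
  have C: "isCont f y" for y
    unfolding fe[abs_def] using sp
    by (intro continuous_intros) (auto simp: add_pos_nonneg)
  have N: "0 \<le> f y" for y using sp by (simp add: fe add_pos_nonneg)
  have lin: "filterlim (\<lambda>y. (y - m) / s) at_bot at_bot"
    unfolding filterlim_at_bot eventually_at_bot_linorder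
  proof
    fix Z show "\<exists>N. \<forall>y\<le>N. (y - m) / s \<le> Z"
      using sp by (intro exI[of _ "m + s*Z"]) (auto simp: field_simps)
  qed
  have A: "((F \<circ> real_of_ereal) \<longlongrightarrow> -1/2) (at_right (-\<infinity>))"
    unfolding ereal_tendsto_simps1 F_def
  proof (rule filterlim_compose[OF _ lin])
    have "((\<lambda>z. arctan z / pi) \<longlongrightarrow> -(pi/2)/pi) at_bot"
      by (intro tendsto_divide tendsto_arctan_at_bot tendsto_const) auto
    then show "((\<lambda>z. arctan z / pi) \<longlongrightarrow> -1/2) at_bot" by simp
  qed
  have B: "((F \<circ> real_of_ereal) \<longlongrightarrow> F x) (at_left (ereal x))"
    unfolding ereal_tendsto_simps1 F_def using sp
    by (intro tendsto_intros) (auto intro!: continuous_intros tendsto_eq_intros)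
  have I: "set_integrable lborel (einterval (-\<infinity>) (ereal x)) f"
       "(LBINT y=-\<infinity>..ereal x. f y) = F x - (-1/2)"
    using interval_integral_FTC_nonneg[of "-\<infinity>" "ereal x" F f, OF _ _ _ _ A B] D C N by auto
  have "(f has_integral (F x + 1/2)) {..<x}"
    using set_borel_integral_eq_integral[OF I(1)] I(2)
    by (simp add: interval_lebesgue_integral_le_eq has_integral_integral)
  then have "(f has_integral (F x + 1/2)) {..x}"
    by (rule has_integral_spike_set_eq[THEN iffD1, rotated -1])
       (auto intro: negligible_subset[of "{x}"])
  then show ?thesis unfolding cauchy_cdf_def f_def[symmetric] F_def m_def s_def
    by (simp add: integral_unique)
qed


lemma sqpos: "(s::real) > 0 \<Longrightarrow> a^2 + s^2 > 0"
  by (intro add_nonneg_pos) auto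

lemma dens_pos: "Im \<theta> > 0 \<Longrightarrow> cauchy_density y \<theta> > 0"
  unfolding cauchy_density_def using sqpos[of "Im \<theta>" "y - Re \<theta>"] by simp

definition G :: "nat \<Rightarrow> (nat \<Rightarrow> real) \<Rightarrow> real \<Rightarrow> real \<Rightarrow> real" where
  "G n x m s = (\<Sum>j=1..n. ln s - ln pi - ln ((x j - m)^2 + s^2))"

lemma G_eq:
  assumes "s > 0"
  shows "G n x m s = ln (cauchy_likelihood n x (Complex m s))"
proof -
  have pos: "cauchy_density (x j) (Complex m s) > 0" for j
    using assms dens_pos[of "Complex m s"] by simp
  have "ln (cauchy_likelihood n x (Complex m s)) = (\<Sum>j=1..n. ln (cauchy_density (x j) (Complex m s)))"
    unfolding cauchy_likelihood_def using pos by (subst ln_prod) (auto simp: less_imp_neq[symmetric])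
  also have "\<dots> = G n x m s" unfolding G_def
  proof (rule sum.cong[OF refl])
    fix j
    have d: "(x j - m)^2 + s^2 > 0" using assms by (simp add: sqpos)
    show "ln (cauchy_density (x j) (Complex m s)) = ln s - ln pi - ln ((x j - m)^2 + s^2)"
      unfolding cauchy_density_def using assms d by (simp add: ln_div ln_mult)
  qed
  finally show ?thesis by simp
qed

lemma G_max:
  assumes mle: "is_cauchy_mle n x \<theta>" and s: "s > 0"
  shows "G n x m s \<le> G n x (Re \<theta>) (Im \<theta>)"
proof -
  have t: "Im \<theta> > 0" using mle by (simp add: is_cauchy_mle_def upper_half_def)
  have pos: "cauchy_likelihood n x (Complex m s) > 0"
    using s unfolding cauchy_likelihood_def
    by (intro prod_pos) (simp add: dens_pos)
  have "cauchy_likelihood n x (Complex m s) \<le> cauchy_likelihood n x \<theta>"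
    using mle s by (auto simp: is_cauchy_mle_def upper_half_def)
  then have "ln (cauchy_likelihood n x (Complex m s)) \<le> ln (cauchy_likelihood n x (Complex (Re \<theta>) (Im \<theta>)))"
    using pos by simp
  then show ?thesis using G_eq[OF s] G_eq[OF t] by simp
qed

lemma foc:
  assumes mle: "is_cauchy_mle n x \<theta>"
  shows "(\<Sum>j=1..n. (x j - Re \<theta>) / ((x j - Re \<theta>)^2 + (Im \<theta>)^2)) = 0"
    and "(\<Sum>j=1..n. 1 / Im \<theta> - 2 * Im \<theta> / ((x j - Re \<theta>)^2 + (Im \<theta>)^2)) = 0"
proof -
  define m0 where "m0 = Re \<theta>"
  define s0 where "s0 = Im \<theta>"
  have t: "s0 > 0" using mle by (simp add: is_cauchy_mle_def upper_half_def s0_def)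
  have dpos: "(x j - m)^2 + s0^2 > 0" for j m using t by (simp add: sqpos)
  have D1: "DERIV (\<lambda>m. G n x m s0) m0 :> (\<Sum>j=1..n. 2 * ((x j - m0) / ((x j - m0)^2 + s0^2)))"
    unfolding G_def
  proof (rule DERIV_sum)
    fix j
    show "((\<lambda>m. ln s0 - ln pi - ln ((x j - m)^2 + s0^2)) has_real_derivative
           2 * ((x j - m0) / ((x j - m0)^2 + s0^2))) (at m0)"
      using dpos[of j m0] by (auto intro!: derivative_eq_intros simp: field_simps minus_divide_left)
  qed
  have "(\<Sum>j=1..n. 2 * ((x j - m0) / ((x j - m0)^2 + s0^2))) = 0"
    using DERIV_local_max[OF D1, of 1] G_max[OF mle t] by (simp add: m0_def s0_def)
  then show "(\<Sum>j=1..n. (x j - Re \<theta>) / ((x j - Re \<theta>)^2 + (Im \<theta>)^2)) = 0"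
    by (simp only: sum_distrib_left[symmetric] m0_def s0_def)
  have D2: "DERIV (\<lambda>s. G n x m0 s) s0 :> (\<Sum>j=1..n. 1 / s0 - 2 * s0 / ((x j - m0)^2 + s0^2))"
    unfolding G_def
  proof (rule DERIV_sum)
    fix j
    show "((\<lambda>s. ln s - ln pi - ln ((x j - m0)^2 + s^2)) has_real_derivative
           1 / s0 - 2 * s0 / ((x j - m0)^2 + s0^2)) (at s0)"
      using dpos[of j m0] t by (auto intro!: derivative_eq_intros simp: field_simps)
  qed
  have "\<forall>y. \<bar>s0 - y\<bar> < s0 \<longrightarrow> G n x m0 y \<le> G n x m0 s0"
    using G_max[OF mle] by (auto simp: m0_def s0_def)
  from DERIV_local_max[OF D2 t this]
  show "(\<Sum>j=1..n. 1 / Im \<theta> - 2 * Im \<theta> / ((x j - Re \<theta>)^2 + (Im \<theta>)^2)) = 0"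
    by (simp add: m0_def s0_def)
qed


lemma s3: "(\<Sum>j::nat=1..3. f j) = f 1 + f 2 + (f 3::real)"
  by (simp add: eval_nat_numeral)
lemma s4: "(\<Sum>j::nat=1..4. f j) = f 1 + f 2 + f 3 + (f 4::real)"
  by (simp add: eval_nat_numeral)

lemma trig_term:
  assumes s: "(s::real) > 0"
  shows "cos (2 * arctan ((y - m) / s)) = - s * (1 / s - 2 * s / ((y - m)^2 + s^2))"
    and "sin (2 * arctan ((y - m) / s)) = 2 * s * ((y - m) / ((y - m)^2 + s^2))"
proof -
  define a where "a = (y - m) / s"
  have ym: "y - m = a * s" using s by (simp add: a_def)
  have q: "sqrt (1 + a^2) ^ 2 = 1 + a^2" by (simp add: add_nonneg_pos)
  have p: "1 + a^2 > 0" by (simp add: add_pos_nonneg)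
  have d: "(y - m)^2 + s^2 = s^2 * (1 + a^2)" by (simp add: ym power_mult_distrib algebra_simps)
  show "cos (2 * arctan ((y - m) / s)) = - s * (1 / s - 2 * s / ((y - m)^2 + s^2))"
  proof -
    have r: "- s * (1 / s - 2 * s / (s ^ 2 * (1 + a ^ 2))) = 2 / (1 + a ^ 2) - 1"
    proof -
      have nz: "s ^ 2 * (1 + a ^ 2) \<noteq> 0" using s p by simp
      have "2 * s / (s ^ 2 * (1 + a ^ 2)) = 2 / (1 + a ^ 2) / s"
        using s p by (simp add: power2_eq_square)
      then show ?thesis using s by (simp add: right_diff_distrib)
    qed
    have l: "cos (arctan a) ^ 2 - sin (arctan a) ^ 2 = 2/(1+a^2) - 1"
      unfolding cos_arctan sin_arctan using p by (simp add: power_divide q field_simps)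
    show ?thesis unfolding a_def[symmetric] cos_double d r l ..
  qed
  show "sin (2 * arctan ((y - m) / s)) = 2 * s * ((y - m) / ((y - m)^2 + s^2))"
  proof -
    have r: "2 * s * (a * s / (s ^ 2 * (1 + a ^ 2))) = 2 * a / (1 + a ^ 2)"
      using s p by (simp add: power2_eq_square)
    have l: "2 * sin (arctan a) * cos (arctan a) = 2 * a / (1 + a ^ 2)"
      unfolding cos_arctan sin_arctan using p by (simp add: real_sqrt_mult_self)
    have "sin (2 * arctan ((y - m) / s)) = 2 * sin (arctan a) * cos (arctan a)"
      by (simp add: a_def sin_double)
    also have "\<dots> = 2 * a / (1 + a ^ 2)" by (rule l)
    also have "\<dots> = 2 * s * ((y - m) / ((y - m)^2 + s^2))"
      unfolding d unfolding ym by (rule r[symmetric])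
    finally show ?thesis .
  qed
qed

lemma cos_eq_02pi:
  assumes "0 < a" "a < 2*pi" "0 < b" "b < 2*pi" "cos a = cos b"
  shows "a = b \<or> a + b = 2*pi"
proof -
  have c1: "cos (2*pi - u) = cos u" for u by (simp add: cos_diff)
  consider "a \<le> pi" "b \<le> pi" | "a \<le> pi" "b > pi" | "a > pi" "b \<le> pi" | "a > pi" "b > pi" by linarith
  then show ?thesis
  proof cases
    case 1 then show ?thesis using cos_inj_pi[of a b] assms by auto
  next
    case 2 then show ?thesis using cos_inj_pi[of a "2*pi - b"] assms c1[of b] by auto
  next
    case 3 then show ?thesis using cos_inj_pi[of "2*pi - a" b] assms c1[of a] by auto
  next
    case 4 then show ?thesis using cos_inj_pi[of "2*pi - a" "2*pi - b"] assms c1[of a] c1[of b] by auto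
  qed
qed

lemma pair_norm: "(cos (p::real) + cos q)^2 + (sin p + sin q)^2 = 2 + 2 * cos (q - p)"
  by (simp add: cos_diff power2_eq_square algebra_simps)
     (smt (verit) sin_cos_squared_add power2_eq_square)

lemma three:
  assumes "-pi < p1" "p1 < p2" "p2 < p3" "p3 < pi"
    and "cos p1 + cos p2 + cos p3 = 0" "sin p1 + sin p2 + sin p3 = 0"
  shows "p2 - p1 = 2*pi/3 \<and> p3 - p2 = 2*pi/3"
proof -
  have e: "cos (q - p) = -1/2" if "(cos p + cos q)^2 + (sin p + sin q)^2 = 1" for p q :: real
    using that pair_norm[of p q] by simp
  have u: "cos r ^2 + sin r ^2 = 1" for r :: real by (rule sin_cos_squared_add2)
  have "(cos p1 + cos p2)^2 + (sin p1 + sin p2)^2 = (- cos p3)^2 + (- sin p3)^2"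
    using assms(5,6) by (smt (verit))
  then have c12: "cos (p2 - p1) = cos (2*pi/3)" using e u[of p3] cos_120 by simp
  have "(cos p1 + cos p3)^2 + (sin p1 + sin p3)^2 = (- cos p2)^2 + (- sin p2)^2"
    using assms(5,6) by (smt (verit))
  then have c13: "cos (p3 - p1) = cos (2*pi/3)" using e u[of p2] cos_120 by simp
  have "(cos p2 + cos p3)^2 + (sin p2 + sin p3)^2 = (- cos p1)^2 + (- sin p1)^2"
    using assms(5,6) by (smt (verit))
  then have c23: "cos (p3 - p2) = cos (2*pi/3)" using e u[of p1] cos_120 by simp
  have A: "p2 - p1 = 2*pi/3 \<or> p2 - p1 + 2*pi/3 = 2*pi"
    using cos_eq_02pi[OF _ _ _ _ c12] assms pi_gt_zero by linarith
  have B: "p3 - p2 = 2*pi/3 \<or> p3 - p2 + 2*pi/3 = 2*pi"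
    using cos_eq_02pi[OF _ _ _ _ c23] assms pi_gt_zero by linarith
  have C: "p3 - p1 = 2*pi/3 \<or> p3 - p1 + 2*pi/3 = 2*pi"
    using cos_eq_02pi[OF _ _ _ _ c13] assms pi_gt_zero by linarith
  show ?thesis using A B C assms pi_gt_zero by linarith
qed

lemma four:
  assumes "-pi < p1" "p1 < p2" "p2 < p3" "p3 < p4" "p4 < pi"
    and "cos p1 + cos p2 + cos p3 + cos p4 = 0" "sin p1 + sin p2 + sin p3 + sin p4 = 0"
  shows "p3 - p1 = pi \<and> p4 - p2 = pi"
proof -
  have "(cos p1 + cos p2)^2 + (sin p1 + sin p2)^2 = (cos p3 + cos p4)^2 + (sin p3 + sin p4)^2"
    using assms(6,7) by (smt (verit) power2_minus)
  then have c1: "cos (p2 - p1) = cos (p4 - p3)" using pair_norm by simp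
  have "(cos p1 + cos p4)^2 + (sin p1 + sin p4)^2 = (cos p2 + cos p3)^2 + (sin p2 + sin p3)^2"
    using assms(6,7) by (smt (verit) power2_minus)
  then have c2: "cos (p4 - p1) = cos (p3 - p2)" using pair_norm by simp
  have A: "p2 - p1 = p4 - p3 \<or> p2 - p1 + (p4 - p3) = 2*pi"
    using cos_eq_02pi[OF _ _ _ _ c1] assms pi_gt_zero by linarith
  have A': "p2 - p1 = p4 - p3" using A assms by linarith
  have B: "p4 - p1 = p3 - p2 \<or> p4 - p1 + (p3 - p2) = 2*pi"
    using cos_eq_02pi[OF _ _ _ _ c2] assms pi_gt_zero by linarith
  show ?thesis using A' B assms by linarith
qed


theorem mainTheorem12:
  fixes n :: nat and x :: "nat \<Rightarrow> real" and \<theta> :: complex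
  assumes sorted: "\<And>i j. 1 \<le> i \<Longrightarrow> i < j \<Longrightarrow> j \<le> n \<Longrightarrow> x i < x j"
    and mle: "is_cauchy_mle n x \<theta>"
  shows "(n = 3 \<longrightarrow> cauchy_cdf (x 3) \<theta> + cauchy_cdf (x 1) \<theta> = 2 * cauchy_cdf (x 2) \<theta>) \<and>
         (n = 4 \<longrightarrow> cauchy_cdf (x 3) \<theta> - cauchy_cdf (x 1) \<theta> = 1/2 \<and>
                   cauchy_cdf (x 4) \<theta> - cauchy_cdf (x 2) \<theta> = 1/2)"
proof -
  define m where "m = Re \<theta>"
  define s where "s = Im \<theta>"
  have sp: "s > 0" using mle by (simp add: is_cauchy_mle_def upper_half_def s_def)
  define \<phi> where "\<phi> = (\<lambda>j. 2 * arctan ((x j - m) / s))"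
  have F: "cauchy_cdf (x j) \<theta> = 1/2 + \<phi> j / (2 * pi)" for j
    using cdf_formula[of \<theta> "x j"] sp by (simp add: \<phi>_def m_def s_def)
  have bnd: "- pi < \<phi> j \<and> \<phi> j < pi" for j
    using arctan_lbound[of "(x j - m) / s"] arctan_ubound[of "(x j - m) / s"]
    by (simp add: \<phi>_def)
  have mono: "\<phi> i < \<phi> j" if "1 \<le> i" "i < j" "j \<le> n" for i j
  proof -
    have "(x i - m) / s < (x j - m) / s"
      using sorted[OF that] sp by (simp add: divide_strict_right_mono)
    then show ?thesis by (simp add: \<phi>_def arctan_less_iff)
  qed
  have SC: "(\<Sum>j=1..n. cos (\<phi> j)) = 0"
  proof -
    have "(\<Sum>j=1..n. cos (\<phi> j)) = (\<Sum>j=1..n. - s * (1 / s - 2 * s / ((x j - m)^2 + s^2)))"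
      unfolding \<phi>_def using trig_term(1)[OF sp] by simp
    also have "\<dots> = - s * (\<Sum>j=1..n. 1 / s - 2 * s / ((x j - m)^2 + s^2))"
      by (simp only: sum_distrib_left)
    also have "\<dots> = 0" using foc(2)[OF mle] by (simp add: m_def s_def)
    finally show ?thesis .
  qed
  have SS: "(\<Sum>j=1..n. sin (\<phi> j)) = 0"
  proof -
    have "(\<Sum>j=1..n. sin (\<phi> j)) = (\<Sum>j=1..n. 2 * s * ((x j - m) / ((x j - m)^2 + s^2)))"
      unfolding \<phi>_def using trig_term(2)[OF sp] by simp
    also have "\<dots> = 2 * s * (\<Sum>j=1..n. (x j - m) / ((x j - m)^2 + s^2))"
      by (simp only: sum_distrib_left)
    also have "\<dots> = 0" using foc(1)[OF mle] by (simp add: m_def s_def)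
    finally show ?thesis .
  qed
  have P3: "cauchy_cdf (x 3) \<theta> + cauchy_cdf (x 1) \<theta> = 2 * cauchy_cdf (x 2) \<theta>" if n3: "n = 3"
  proof -
    have "\<phi> 2 - \<phi> 1 = 2*pi/3 \<and> \<phi> 3 - \<phi> 2 = 2*pi/3"
    proof (rule three)
      show "cos (\<phi> 1) + cos (\<phi> 2) + cos (\<phi> 3) = 0"
        using SC s3[of "\<lambda>j. cos (\<phi> j)"] n3 by simp
      show "sin (\<phi> 1) + sin (\<phi> 2) + sin (\<phi> 3) = 0"
        using SS s3[of "\<lambda>j. sin (\<phi> j)"] n3 by simp
    qed (use bnd mono[of 1 2] mono[of 2 3] n3 in auto)
    then have "\<phi> 3 + \<phi> 1 = 2 * \<phi> 2" by linarith
    then have "\<phi> 3 / (2*pi) + \<phi> 1 / (2*pi) = 2 * (\<phi> 2 / (2*pi))"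
      by (metis add_divide_distrib times_divide_eq_right)
    moreover have "a + b = 2 * c \<Longrightarrow> (1/2 + a) + (1/2 + b) = 2 * (1/2 + c)" for a b c :: real
      by (simp add: distrib_left)
    ultimately show ?thesis unfolding F by blast
  qed
  have P4: "cauchy_cdf (x 3) \<theta> - cauchy_cdf (x 1) \<theta> = 1/2 \<and>
                   cauchy_cdf (x 4) \<theta> - cauchy_cdf (x 2) \<theta> = 1/2" if n4: "n = 4"
  proof -
    have "\<phi> 3 - \<phi> 1 = pi \<and> \<phi> 4 - \<phi> 2 = pi"
    proof (rule four)
      show "cos (\<phi> 1) + cos (\<phi> 2) + cos (\<phi> 3) + cos (\<phi> 4) = 0"
        using SC s4[of "\<lambda>j. cos (\<phi> j)"] n4 by simp
      show "sin (\<phi> 1) + sin (\<phi> 2) + sin (\<phi> 3) + sin (\<phi> 4) = 0"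
        using SS s4[of "\<lambda>j. sin (\<phi> j)"] n4 by simp
    qed (use bnd mono[of 1 2] mono[of 2 3] mono[of 3 4] n4 in auto)
    then have "\<phi> 3 / (2*pi) - \<phi> 1 / (2*pi) = 1/2 \<and> \<phi> 4 / (2*pi) - \<phi> 2 / (2*pi) = 1/2"
      by (simp add: diff_divide_distrib[symmetric])
    then show ?thesis unfolding F by linarith
  qed
  show ?thesis using P3 P4 by blast
qed

end
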